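(* Let $p>0$, $M\in\mathbb N_0$, $d_{\max}\in\mathbb N_0$, $c_p=\min\{2^{1-p},1\}$, and $$d(p,M,d_{\max})=1+\bigl\lfloor c_p^{-2}+(c_p^{-1}+c_p^{-2})\,d_{\max}M^p\bigr\rfloor.$$ For every $d\ge d(p,M,d_{\max})$ and every $\omega^0\in\mathbb Z^V$ whose set of broken edges $D=\{\{v,w\}:\omega^0_v\neq\omega^0_w\}$ satisfies $d_D\le d_{\max}$ and whose increments satisfy $\max_{v\sim w}|\omega^0_v-\omega^0_w|\le M$, the configuration $\omega^0$ is stable for the $p$-SOS model on $\mathcal T^d$ with stability constant $c=dc_p^2-1-(c_p+1)d_{\max}M^p>0$.
   Context: $\mathcal T^d=(V,E)$ is the Cayley tree of order $d$ (every vertex has $d+1$ neighbours). For $D\subset E$, $d_D(v)$ is the number of edges of $D$ incident to $v$ and $d_D=\max_v d_D(v)$. For configurations $\omega,\omega^0\in\mathbb Z^V$ differing at finitely many sites, $H(\omega)-H(\omega^0)=\sum_{\{v,w\}\in E}(|\omega_v-\omega_w|^p-|\omega^0_v-\omega^0_w|^p)$ (a finite sum). A configuration $\omega^0\in\mathbb Z^V$ is called stable with stability constant $c>0$ if for all $\omega\in\mathbb Z^V$ differing from $\omega^0$ at finitely many sites, $H(\omega)-H(\omega^0)\ge c\sum_{v}|\omega_v-\omega^0_v|^p$. *)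

theory Defs
  imports Complex_Main
begin

text \<open>Cayley tree of order d: vertices are reduced words over the alphabet {0..d}
  (free product of d+1 copies of Z/2); w and w@[a] are neighbours.
  Every vertex has exactly d+1 neighbours.\<close>

definition tree_V :: "nat \<Rightarrow> nat list set" where
  "tree_V d = {w. (\<forall>x\<in>set w. x \<le> d) \<and> (\<forall>i. Suc i < length w \<longrightarrow> w ! i \<noteq> w ! Suc i)}"

text \<open>Each (undirected) edge is represented exactly once, as the pair (parent, child).\<close>
definition tree_E :: "nat \<Rightarrow> (nat list \<times> nat list) set" where
  "tree_E d = {(v, v @ [a]) | v a. v @ [a] \<in> tree_V d}"

definition incident :: "nat list \<Rightarrow> (nat list \<times> nat list) \<Rightarrow> bool" where
  "incident v e \<longleftrightarrow> fst e = v \<or> snd e = v"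

definition broken_edges :: "nat \<Rightarrow> (nat list \<Rightarrow> int) \<Rightarrow> (nat list \<times> nat list) set" where
  "broken_edges d \<omega> = {e \<in> tree_E d. \<omega> (fst e) \<noteq> \<omega> (snd e)}"

definition degree_in :: "(nat list \<times> nat list) set \<Rightarrow> nat list \<Rightarrow> nat" where
  "degree_in D v = card {e \<in> D. incident v e}"

definition diff_sites :: "nat \<Rightarrow> (nat list \<Rightarrow> int) \<Rightarrow> (nat list \<Rightarrow> int) \<Rightarrow> nat list set" where
  "diff_sites d \<omega> \<omega>0 = {v \<in> tree_V d. \<omega> v \<noteq> \<omega>0 v}"

text \<open>H(\<omega>) - H(\<omega>0): the sum over all edges; only edges touching a site where the
  configurations differ contribute, so we sum over those (finitely many).\<close>
definition H_diff :: "real \<Rightarrow> nat \<Rightarrow> (nat list \<Rightarrow> int) \<Rightarrow> (nat list \<Rightarrow> int) \<Rightarrow> real" where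
  "H_diff p d \<omega> \<omega>0 =
     (\<Sum>e\<in>{e \<in> tree_E d. \<exists>v\<in>diff_sites d \<omega> \<omega>0. incident v e}.
        real_of_int \<bar>\<omega> (fst e) - \<omega> (snd e)\<bar> powr p
        - real_of_int \<bar>\<omega>0 (fst e) - \<omega>0 (snd e)\<bar> powr p)"

definition stable :: "real \<Rightarrow> nat \<Rightarrow> (nat list \<Rightarrow> int) \<Rightarrow> real \<Rightarrow> bool" where
  "stable p d \<omega>0 c \<longleftrightarrow> c > 0 \<and>
     (\<forall>\<omega>. finite (diff_sites d \<omega> \<omega>0) \<longrightarrow>
        H_diff p d \<omega> \<omega>0 \<ge> c * (\<Sum>v\<in>diff_sites d \<omega> \<omega>0. real_of_int \<bar>\<omega> v - \<omega>0 v\<bar> powr p))"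

definition c_p :: "real \<Rightarrow> real" where
  "c_p p = min (2 powr (1 - p)) 1"

definition d_bound :: "real \<Rightarrow> nat \<Rightarrow> nat \<Rightarrow> nat" where
  "d_bound p M dmax = 1 + nat \<lfloor>(c_p p) powi (-2)
       + ((c_p p) powi (-1) + (c_p p) powi (-2)) * real dmax * (real M powr p)\<rfloor>"

end

theory Submission
  imports Defs "HOL-Analysis.Analysis"
begin


lemma cp_pos: "c_p p > 0" by (simp add: c_p_def)
lemma cp_le1: "c_p p \<le> 1" by (simp add: c_p_def)

lemma sub_add_pow:
  fixes a b p :: real
  assumes a: "a > 0" and b: "b > 0" and p: "0 < p" "p < 1"
  shows "(a + b) powr p \<le> a powr p + b powr p"
proof -
  have s: "a + b > 0" using a b by simp
  have h1: "a/(a+b) \<le> (a/(a+b)) powr p"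
  proof -
    have "(a/(a+b)) powr 1 \<le> (a/(a+b)) powr p"
      by (rule powr_mono') (use a b p in auto)
    thus ?thesis using a b by simp
  qed
  have h2: "b/(a+b) \<le> (b/(a+b)) powr p"
  proof -
    have "(b/(a+b)) powr 1 \<le> (b/(a+b)) powr p"
      by (rule powr_mono') (use a b p in auto)
    thus ?thesis using a b by simp
  qed
  have "1 \<le> (a/(a+b)) powr p + (b/(a+b)) powr p"
  proof -
    have "a/(a+b) + b/(a+b) = 1" using s by (simp add: add_divide_distrib[symmetric])
    thus ?thesis using h1 h2 by linarith
  qed
  also have "\<dots> = (a powr p + b powr p) / (a+b) powr p"
    using a b by (simp add: powr_divide add_divide_distrib)
  finally show ?thesis using s by (simp add: le_divide_eq)
qed

lemma conv_pow:
  fixes a b p :: real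
  assumes a: "a > 0" and b: "b > 0" and p: "p \<ge> 1"
  shows "2 powr (1 - p) * (a + b) powr p \<le> a powr p + b powr p"
proof -
  have "((1 - 1/2) *\<^sub>R a + (1/2) *\<^sub>R b) powr p \<le> (1 - 1/2) * a powr p + (1/2) * b powr p"
    by (rule convex_onD[OF powr_convex[OF p]]) (use a b in auto)
  hence "((a+b)/2) powr p \<le> (a powr p + b powr p)/2" by (simp add: field_simps)
  hence "(a+b) powr p / 2 powr p \<le> (a powr p + b powr p)/2"
    using a b by (simp add: powr_divide)
  hence "(a+b) powr p \<le> (a powr p + b powr p) * 2 powr p / 2"
    by (simp add: divide_le_eq field_simps)
  hence "2 powr (1 - p) * (a+b) powr p \<le> 2 powr (1 - p) * ((a powr p + b powr p) * 2 powr p / 2)"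
    by (intro mult_left_mono) auto
  also have "\<dots> = (a powr p + b powr p) * (2 powr (1 - p) * 2 powr p) / 2" by simp
  also have "2 powr (1 - p) * 2 powr p = 2" by (simp add: powr_add[symmetric])
  finally show ?thesis by simp
qed

lemma key_ab:
  fixes a b p :: real
  assumes a: "a \<ge> 0" and b: "b \<ge> 0" and p: "0 < p"
  shows "c_p p * (a + b) powr p \<le> a powr p + b powr p"
proof (cases "a = 0 \<or> b = 0")
  case True
  thus ?thesis using cp_le1[of p] cp_pos[of p] a b
    by (auto intro!: mult_left_le_one_le)
next
  case False
  hence a': "a > 0" and b': "b > 0" using a b by auto
  show ?thesis
  proof (cases "p < 1")
    case True
    hence "c_p p = 1" by (simp add: c_p_def)
    thus ?thesis using sub_add_pow[OF a' b' p True] by simp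
  next
    case False
    have "2 powr (1 - p) \<le> 2 powr 0" by (rule powr_mono) (use False in auto)
    hence "c_p p = 2 powr (1 - p)" by (simp add: c_p_def)
    thus ?thesis using conv_pow[OF a' b'] False by simp
  qed
qed

lemma key_int:
  fixes x y :: int and p :: real
  assumes "p > 0"
  shows "c_p p * real_of_int \<bar>y\<bar> powr p \<le> real_of_int \<bar>x - y\<bar> powr p + real_of_int \<bar>x\<bar> powr p"
proof -
  have "c_p p * real_of_int \<bar>y\<bar> powr p \<le> c_p p * (real_of_int \<bar>x - y\<bar> + real_of_int \<bar>x\<bar>) powr p"
    using cp_pos[of p] assms by (intro mult_left_mono powr_mono2) auto
  also have "\<dots> \<le> real_of_int \<bar>x - y\<bar> powr p + real_of_int \<bar>x\<bar> powr p"
    by (rule key_ab) (use assms in auto)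
  finally show ?thesis .
qed



lemma tree_E_cases: "e \<in> tree_E d \<Longrightarrow> \<exists>a. snd e = fst e @ [a] \<and> fst e @ [a] \<in> tree_V d"
  by (auto simp: tree_E_def)

lemma tree_V_prefix: "v @ [a] \<in> tree_V d \<Longrightarrow> v \<in> tree_V d"
  unfolding tree_V_def
proof (safe)
  fix i assume h: "\<forall>i. Suc i < length (v @ [a]) \<longrightarrow> (v @ [a]) ! i \<noteq> (v @ [a]) ! Suc i"
    and i: "Suc i < length v" and eq: "v ! i = v ! Suc i"
  from h[rule_format, of i] i eq show False by (simp add: nth_append)
qed auto

lemma tree_E_V: "e \<in> tree_E d \<Longrightarrow> fst e \<in> tree_V d \<and> snd e \<in> tree_V d"
  using tree_E_cases[of e d] tree_V_prefix by auto

lemma inj_snd: "inj_on snd (tree_E d)"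
proof (rule inj_onI)
  fix x y assume x: "x \<in> tree_E d" and y: "y \<in> tree_E d" and e: "snd x = snd y"
  from tree_E_cases[OF x] obtain a where a: "snd x = fst x @ [a]" by blast
  from tree_E_cases[OF y] obtain b where b: "snd y = fst y @ [b]" by blast
  have "fst x = butlast (snd x)" using a by simp
  moreover have "fst y = butlast (snd y)" using b by simp
  ultimately have "fst x = fst y" using e by simp
  thus "x = y" using e by (simp add: prod_eq_iff)
qed

lemma incident_finite: "finite {e \<in> tree_E d. incident v e}"
proof -
  have "{e \<in> tree_E d. incident v e} \<subseteq> (\<lambda>a. (v, v @ [a])) ` {..d} \<union> {(butlast v, v)}"
  proof
    fix e assume "e \<in> {e \<in> tree_E d. incident v e}"
    hence e: "e \<in> tree_E d" and inc: "fst e = v \<or> snd e = v" by (auto simp: incident_def)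
    from tree_E_cases[OF e] obtain a where a: "snd e = fst e @ [a]" "fst e @ [a] \<in> tree_V d" by blast
    have "a \<le> d" using a(2) by (auto simp: tree_V_def)
    show "e \<in> (\<lambda>a. (v, v @ [a])) ` {..d} \<union> {(butlast v, v)}"
      using inc a \<open>a \<le> d\<close> by (cases e) auto
  qed
  thus ?thesis by (rule finite_subset) auto
qed

lemma child_in_V:
  assumes u: "u \<in> tree_V d" and a: "a \<le> d" and na: "u = [] \<or> a \<noteq> last u"
  shows "u @ [a] \<in> tree_V d"
  unfolding tree_V_def
proof (safe)
  fix x assume "x \<in> set (u @ [a])" thus "x \<le> d" using u a by (auto simp: tree_V_def)
next
  fix i assume i: "Suc i < length (u @ [a])" and eq: "(u @ [a]) ! i = (u @ [a]) ! Suc i"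
  show False
  proof (cases "Suc i < length u")
    case True
    thus False using u eq by (auto simp: tree_V_def nth_append)
  next
    case False
    hence li: "Suc i = length u" using i by simp
    hence "u \<noteq> []" by auto
    have "i = length u - 1" using li by simp
    hence "u ! i = last u" using \<open>u \<noteq> []\<close> by (simp add: last_conv_nth)
    thus False using eq li na \<open>u \<noteq> []\<close> by (simp add: nth_append)
  qed
qed

lemma children_card:
  assumes u: "u \<in> tree_V d"
  shows "d \<le> card {e \<in> tree_E d. fst e = u}"
proof -
  define X where "X = {..d} - {last u}"
  have "X \<subseteq> {a. a \<le> d \<and> (u = [] \<or> a \<noteq> last u)}" by (auto simp: X_def)
  have sub: "(\<lambda>a. (u, u @ [a])) ` X \<subseteq> {e \<in> tree_E d. fst e = u}"
    using child_in_V[OF u] by (auto simp: X_def tree_E_def)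
  have fin: "finite {e \<in> tree_E d. fst e = u}"
    by (rule finite_subset[OF _ incident_finite[of d u]]) (auto simp: incident_def)
  have "card X \<ge> d" unfolding X_def
    using card_Diff_singleton_if[of "{..d}" "last u"] by (auto split: if_splits)
  also have "card X = card ((\<lambda>a. (u, u @ [a])) ` X)"
    by (rule card_image[symmetric]) (auto simp: inj_on_def)
  also have "\<dots> \<le> card {e \<in> tree_E d. fst e = u}" by (rule card_mono[OF fin sub])
  finally show ?thesis .
qed


lemma cpos:
  fixes p :: real and M dmax d :: nat
  assumes "p > 0" and "d \<ge> d_bound p M dmax"
  shows "real d * (c_p p)^2 - 1 - (c_p p + 1) * real dmax * (real M powr p) > 0" and "d \<ge> 1"
proof -
  define cp where "cp = c_p p"
  define K where "K = real dmax * (real M powr p)"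
  have cp0: "cp > 0" using cp_pos by (simp add: cp_def)
  have K0: "K \<ge> 0" by (simp add: K_def)
  define X where "X = inverse (cp^2) + (inverse cp + inverse (cp^2)) * K"
  have X0: "X \<ge> 0" using cp0 K0 by (simp add: X_def)
  have db: "d_bound p M dmax = 1 + nat \<lfloor>X\<rfloor>"
    by (simp add: d_bound_def X_def cp_def K_def power_int_minus mult.assoc)
  have "real d \<ge> 1 + real (nat \<lfloor>X\<rfloor>)" using assms(2) db by simp
  also have "real (nat \<lfloor>X\<rfloor>) = of_int \<lfloor>X\<rfloor>" using X0 by simp
  finally have dX: "real d > X" by linarith
  thus "d \<ge> 1" using X0 by simp
  have "real d * cp^2 > X * cp^2" using dX cp0 by simp
  also have "X * cp^2 = 1 + (cp + 1) * K" using cp0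
    by (simp add: X_def field_simps power2_eq_square)
  finally show "real d * (c_p p)^2 - 1 - (c_p p + 1) * real dmax * (real M powr p) > 0"
    by (simp add: cp_def K_def mult.assoc)
qed


lemma sum_zero_outside_le:
  fixes f :: "'a \<Rightarrow> real"
  assumes "finite X" "finite S" "\<And>x. x \<in> S \<Longrightarrow> f x \<ge> 0" "\<And>x. x \<in> X \<Longrightarrow> x \<notin> S \<Longrightarrow> f x = 0"
  shows "sum f X \<le> sum f S"
proof -
  have "sum f X = sum f (X \<inter> S)"
    by (rule sum.mono_neutral_right) (use assms in auto)
  also have "\<dots> \<le> sum f S"
    by (rule sum_mono2) (use assms in auto)
  finally show ?thesis .
qed

lemma main_ineq:
  fixes p :: real and M dmax d :: nat and \<omega>0 \<omega> :: "nat list \<Rightarrow> int"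
  assumes p: "p > 0" and d1: "d \<ge> 1"
    and deg: "\<forall>v\<in>tree_V d. degree_in (broken_edges d \<omega>0) v \<le> dmax"
    and Mb: "\<forall>e\<in>tree_E d. \<bar>\<omega>0 (fst e) - \<omega>0 (snd e)\<bar> \<le> int M"
    and finS: "finite (diff_sites d \<omega> \<omega>0)"
  shows "H_diff p d \<omega> \<omega>0 \<ge> (real d * (c_p p)^2 - 1 - (c_p p + 1) * real dmax * (real M powr p))
           * (\<Sum>v\<in>diff_sites d \<omega> \<omega>0. real_of_int \<bar>\<omega> v - \<omega>0 v\<bar> powr p)"
proof -
  define S where "S = diff_sites d \<omega> \<omega>0"
  define A where "A v = real_of_int \<bar>\<omega> v - \<omega>0 v\<bar> powr p" for v
  define F where "F = {e \<in> tree_E d. \<exists>v\<in>S. incident v e}"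
  define B where "B = broken_edges d \<omega>0"
  define cp where "cp = c_p p"
  define Mp where "Mp = real M powr p"
  define tm where "tm e = real_of_int \<bar>\<omega> (fst e) - \<omega> (snd e)\<bar> powr p
        - real_of_int \<bar>\<omega>0 (fst e) - \<omega>0 (snd e)\<bar> powr p" for e
  have finS': "finite S" using finS by (simp add: S_def)
  have SV: "S \<subseteq> tree_V d" by (auto simp: S_def diff_sites_def)
  have A0: "A v \<ge> 0" for v by (simp add: A_def)
  have A1: "A v \<ge> 1" if "v \<in> S" for v
  proof -
    have "\<omega> v \<noteq> \<omega>0 v" using that by (auto simp: S_def diff_sites_def)
    hence "real_of_int \<bar>\<omega> v - \<omega>0 v\<bar> \<ge> 1" by linarith
    thus ?thesis unfolding A_def using p by (intro ge_one_powr_ge_zero) auto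
  qed
  have Aout: "A v = 0" if "v \<in> tree_V d" "v \<notin> S" for v
    using that by (auto simp: A_def S_def diff_sites_def)
  have cp0: "cp > 0" and cp1: "cp \<le> 1" using cp_pos cp_le1 by (auto simp: cp_def)
  have Mp0: "Mp \<ge> 0" by (simp add: Mp_def)
  have FE: "F \<subseteq> tree_E d" by (auto simp: F_def)
  have finF: "finite F"
  proof -
    have "F \<subseteq> (\<Union>v\<in>S. {e \<in> tree_E d. incident v e})" by (auto simp: F_def)
    moreover have "finite (\<Union>v\<in>S. {e \<in> tree_E d. incident v e})"
      using finS' incident_finite by blast
    ultimately show ?thesis by (rule finite_subset)
  qed
  have BE: "B \<subseteq> tree_E d" by (auto simp: B_def broken_edges_def)
  have edge: "tm e \<ge> cp * A (fst e) - A (snd e) - (if e \<in> B then Mp + cp * A (fst e) else 0)"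
    if e: "e \<in> tree_E d" for e
  proof (cases "e \<in> B")
    case True
    have "\<bar>\<omega>0 (fst e) - \<omega>0 (snd e)\<bar> \<le> int M" using Mb e by blast
    hence h: "real_of_int \<bar>\<omega>0 (fst e) - \<omega>0 (snd e)\<bar> powr p \<le> Mp"
      unfolding Mp_def using p by (intro powr_mono2) auto
    have t: "tm e \<ge> - (real_of_int \<bar>\<omega>0 (fst e) - \<omega>0 (snd e)\<bar> powr p)"
      unfolding tm_def by simp
    show ?thesis using t h True A0[of "snd e"] by simp
  next
    case False
    hence eq: "\<omega>0 (fst e) = \<omega>0 (snd e)" using e by (auto simp: B_def broken_edges_def)
    have "cp * A (fst e) \<le> real_of_int \<bar>(\<omega> (snd e) - \<omega>0 (snd e)) - (\<omega> (fst e) - \<omega>0 (fst e))\<bar> powr p + A (snd e)"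
      unfolding A_def cp_def by (rule key_int[OF p])
    also have "\<bar>(\<omega> (snd e) - \<omega>0 (snd e)) - (\<omega> (fst e) - \<omega>0 (fst e))\<bar> = \<bar>\<omega> (fst e) - \<omega> (snd e)\<bar>"
      using eq by simp
    finally show ?thesis using False eq by (simp add: tm_def)
  qed
  have Hd: "H_diff p d \<omega> \<omega>0 = sum tm F"
    by (simp add: H_diff_def F_def S_def tm_def)
  have step1: "sum tm F \<ge> cp * sum (\<lambda>e. A (fst e)) F - sum (\<lambda>e. A (snd e)) F
       - sum (\<lambda>e. if e \<in> B then Mp + cp * A (fst e) else 0) F"
  proof -
    have "sum tm F \<ge> sum (\<lambda>e. cp * A (fst e) - A (snd e) - (if e \<in> B then Mp + cp * A (fst e) else 0)) F"
      by (rule sum_mono, rule edge) (use FE in blast)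
    thus ?thesis by (simp add: sum_subtractf sum_distrib_left)
  qed
  have S1: "sum (\<lambda>e. A (fst e)) F \<ge> real d * sum A S"
  proof -
    define F' where "F' = {e \<in> F. fst e \<in> S}"
    have "sum (\<lambda>e. A (fst e)) F' \<le> sum (\<lambda>e. A (fst e)) F"
      by (rule sum_mono2) (use finF A0 in \<open>auto simp: F'_def\<close>)
    moreover have "sum (\<lambda>e. A (fst e)) F' = (\<Sum>u\<in>S. sum (\<lambda>e. A (fst e)) {e\<in>F'. fst e = u})"
      by (rule sum.group[symmetric]) (use finF finS' in \<open>auto simp: F'_def\<close>)
    moreover have "(\<Sum>u\<in>S. sum (\<lambda>e. A (fst e)) {e\<in>F'. fst e = u}) \<ge> (\<Sum>u\<in>S. real d * A u)"
    proof (rule sum_mono)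
      fix u assume u: "u \<in> S"
      have set: "{e\<in>F'. fst e = u} = {e \<in> tree_E d. fst e = u}"
        using u by (auto simp: F'_def F_def incident_def)
      have "sum (\<lambda>e. A (fst e)) {e\<in>F'. fst e = u} = real (card {e \<in> tree_E d. fst e = u}) * A u"
        unfolding set by simp
      moreover have "real d \<le> real (card {e \<in> tree_E d. fst e = u})"
        using children_card[of u d] u SV by auto
      ultimately show "real d * A u \<le> sum (\<lambda>e. A (fst e)) {e\<in>F'. fst e = u}"
        using mult_right_mono[OF _ A0[of u], of "real d" "real (card {e \<in> tree_E d. fst e = u})"]
        by linarith
    qed
    ultimately show ?thesis by (simp add: sum_distrib_left)
  qed
  have S2: "sum (\<lambda>e. A (snd e)) F \<le> sum A S"
  proof -
    have "sum (\<lambda>e. A (snd e)) F = sum A (snd ` F)"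
      by (rule sum.reindex[symmetric, unfolded comp_def]) (rule inj_on_subset[OF inj_snd FE])
    also have "\<dots> \<le> sum A S"
      by (rule sum_zero_outside_le) (use finF finS' A0 Aout FE tree_E_V in auto)
    finally show ?thesis .
  qed
  have S3: "sum (\<lambda>e. if e \<in> B then Mp + cp * A (fst e) else 0) F \<le> (cp + 1) * real dmax * Mp * sum A S"
  proof (cases "M = 0")
    case True
    have "F \<inter> B = {}" using Mb True FE by (auto simp: B_def broken_edges_def)
    hence "sum (\<lambda>e. if e \<in> B then Mp + cp * A (fst e) else 0) F = 0"
      by (intro sum.neutral) auto
    thus ?thesis using True p by (simp add: Mp_def)
  next
    case False
    hence Mp1: "Mp \<ge> 1" unfolding Mp_def using p by (intro ge_one_powr_ge_zero) auto
    have finFB: "finite (F \<inter> B)" using finF by simp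
    have "sum (\<lambda>e. if e \<in> B then Mp + cp * A (fst e) else 0) F = sum (\<lambda>e. Mp + cp * A (fst e)) (F \<inter> B)"
      using finF by (simp add: sum.If_cases)
    also have "\<dots> = Mp * real (card (F \<inter> B)) + cp * sum (\<lambda>e. A (fst e)) (F \<inter> B)"
      by (simp add: sum.distrib sum_distrib_left)
    finally have eq: "sum (\<lambda>e. if e \<in> B then Mp + cp * A (fst e) else 0) F =
        Mp * real (card (F \<inter> B)) + cp * sum (\<lambda>e. A (fst e)) (F \<inter> B)" .
    have degS: "card {e \<in> B. incident v e} \<le> dmax" if "v \<in> S" for v
      using deg that SV by (auto simp: B_def degree_in_def)
    have finBv: "finite {e \<in> B. incident v e}" for v
      by (rule finite_subset[OF _ incident_finite[of d v]]) (use BE in auto)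
    have c1: "real (card (F \<inter> B)) \<le> real dmax * sum A S"
    proof -
      have "F \<inter> B \<subseteq> (\<Union>v\<in>S. {e \<in> B. incident v e})" by (auto simp: F_def)
      hence "card (F \<inter> B) \<le> card (\<Union>v\<in>S. {e \<in> B. incident v e})"
        by (rule card_mono[rotated]) (use finS' finBv in auto)
      also have "\<dots> \<le> (\<Sum>v\<in>S. card {e \<in> B. incident v e})" by (rule card_UN_le[OF finS'])
      also have "\<dots> \<le> (\<Sum>v\<in>S. dmax)" by (rule sum_mono) (use degS in auto)
      finally have "real (card (F \<inter> B)) \<le> real dmax * real (card S)" by (simp add: mult.commute flip: of_nat_mult)
      also have "real (card S) \<le> sum A S"
        using sum_mono[of S "\<lambda>_. 1::real" A] A1 by simp
      finally show ?thesis by (simp add: mult_left_mono)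
    qed
    have c2: "sum (\<lambda>e. A (fst e)) (F \<inter> B) \<le> real dmax * sum A S"
    proof -
      define G where "G = {e \<in> F \<inter> B. fst e \<in> S}"
      have z: "A (fst e) = 0" if "e \<in> F" "fst e \<notin> S" for e
        using Aout[of "fst e"] tree_E_V[of e d] FE that by blast
      have "sum (\<lambda>e. A (fst e)) (F \<inter> B) = sum (\<lambda>e. A (fst e)) G"
        by (rule sum.mono_neutral_right) (use finFB z in \<open>auto simp: G_def\<close>)
      also have "\<dots> = (\<Sum>u\<in>S. sum (\<lambda>e. A (fst e)) {e\<in>G. fst e = u})"
        by (rule sum.group[symmetric]) (use finF finS' in \<open>auto simp: G_def\<close>)
      also have "\<dots> \<le> (\<Sum>u\<in>S. real dmax * A u)"
      proof (rule sum_mono)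
        fix u assume u: "u \<in> S"
        have "sum (\<lambda>e. A (fst e)) {e\<in>G. fst e = u} = real (card {e\<in>G. fst e = u}) * A u"
          by simp
        moreover have "card {e\<in>G. fst e = u} \<le> card {e \<in> B. incident u e}"
          by (rule card_mono[OF finBv]) (auto simp: G_def incident_def)
        ultimately show "sum (\<lambda>e. A (fst e)) {e\<in>G. fst e = u} \<le> real dmax * A u"
          using degS[OF u] A0[of u]
          by (metis (no_types, lifting) le_trans mult_right_mono of_nat_le_iff)
      qed
      finally show ?thesis by (simp add: sum_distrib_left)
    qed
    have sA: "sum A S \<ge> 0" using A0 by (simp add: sum_nonneg)
    have "Mp * real (card (F \<inter> B)) \<le> Mp * (real dmax * sum A S)"
      using c1 Mp0 by (rule mult_left_mono)
    moreover have "cp * sum (\<lambda>e. A (fst e)) (F \<inter> B) \<le> cp * (Mp * (real dmax * sum A S))"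
    proof -
      have "real dmax * sum A S \<le> Mp * (real dmax * sum A S)"
        using mult_right_mono[OF Mp1, of "real dmax * sum A S"] sA by simp
      thus ?thesis using c2 cp0 by (intro mult_left_mono) auto
    qed
    ultimately show ?thesis unfolding eq by (simp add: algebra_simps)
  qed
  have sA: "sum A S \<ge> 0" using A0 by (simp add: sum_nonneg)
  have "sum tm F \<ge> cp * (real d * sum A S) - sum A S - (cp + 1) * real dmax * Mp * sum A S"
    using step1 S2 S3 mult_left_mono[OF S1, of cp] cp0 by linarith
  moreover have "real d * cp^2 * sum A S \<le> cp * (real d * sum A S)"
  proof -
    have "cp^2 \<le> cp" using cp0 cp1 by (simp add: power2_eq_square mult_left_le_one_le)
    hence "real d * cp^2 * sum A S \<le> real d * cp * sum A S"
      using sA by (intro mult_right_mono mult_left_mono) auto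
    thus ?thesis by (simp add: ac_simps)
  qed
  ultimately have "sum tm F \<ge> (real d * cp^2 - 1 - (cp + 1) * real dmax * Mp) * sum A S"
    by (simp add: algebra_simps)
  thus ?thesis unfolding Hd by (simp add: cp_def Mp_def A_def S_def)
qed


theorem mainTheorem4:
  fixes p :: real and M dmax d :: nat and \<omega>0 :: "nat list \<Rightarrow> int"
  assumes "p > 0"
    and "d \<ge> d_bound p M dmax"
    and "\<forall>v\<in>tree_V d. degree_in (broken_edges d \<omega>0) v \<le> dmax"
    and "\<forall>e\<in>tree_E d. \<bar>\<omega>0 (fst e) - \<omega>0 (snd e)\<bar> \<le> int M"
  shows "stable p d \<omega>0 (real d * (c_p p)^2 - 1 - (c_p p + 1) * real dmax * (real M powr p))"
  unfolding stable_def
proof (intro conjI allI impI)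
  show "real d * (c_p p)^2 - 1 - (c_p p + 1) * real dmax * (real M powr p) > 0"
    by (rule cpos(1)[OF assms(1,2)])
  fix \<omega> assume "finite (diff_sites d \<omega> \<omega>0)"
  thus "(real d * (c_p p)^2 - 1 - (c_p p + 1) * real dmax * (real M powr p))
      * (\<Sum>v\<in>diff_sites d \<omega> \<omega>0. real_of_int \<bar>\<omega> v - \<omega>0 v\<bar> powr p) \<le> H_diff p d \<omega> \<omega>0"
    by (rule main_ineq[OF assms(1) cpos(2)[OF assms(1,2)] assms(3,4)])
qed

end
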